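(* Let $(M,\|\cdot\|)$ be a normed space, $d(x,y)=\|x-y\|$, with size notion $s(x)=\|x\|$. Then $\mathrm{AH}_d$ is a pseudo-metric on $\mathcal{P}(M)$ (reflexive, symmetric, and satisfying the triangle inequality).
   Context: For $X,Y\subseteq M$, \[ \overrightarrow{\mathrm{AH}}_{d}(X,Y)=\lim_{k\to\infty}\ \sup_{x\in X,\ \|x\|\ge k}\ \inf_{y\in Y} \|x-y\|,\qquad \mathrm{AH}_d(X,Y)=\max\{\overrightarrow{\mathrm{AH}}_{d}(X,Y),\overrightarrow{\mathrm{AH}}_{d}(Y,X)\}, \] with the supremum over the empty set equal to $0$ and values in $[0,+\infty]$ (the infimum over the empty set being $+\infty=\sup d$ when $M\neq\{0\}$). *)

theory Defs
  imports "HOL-Analysis.Analysis"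
begin

text \<open>The supremum over the empty set is 0
  (realised by inserting 0, harmless since all values are nonnegative);
  the infimum over the empty set is +infinity.\<close>

definition AH_dir :: "'a::real_normed_vector set \<Rightarrow> 'a set \<Rightarrow> ereal" where
  "AH_dir X Y = Lim at_top (\<lambda>k::real.
      Sup (insert 0 ((\<lambda>x. INF y\<in>Y. ereal (norm (x - y))) ` {x\<in>X. norm x \<ge> k})))"

definition AH :: "'a::real_normed_vector set \<Rightarrow> 'a set \<Rightarrow> ereal" where
  "AH X Y = max (AH_dir X Y) (AH_dir Y X)"

end

theory Submission
  imports Defs
begin

lemma Lim_antitone_ereal:
  fixes f :: "real \<Rightarrow> ereal"
  assumes mono: "\<And>k l. k \<le> l \<Longrightarrow> f l \<le> f k"
  shows "Lim at_top f = (INF k. f k)"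
proof -
  have "(f \<longlongrightarrow> (INF k. f k)) at_top"
  proof (rule order_tendstoI)
    fix a assume a: "a < (INF k. f k)"
    have "a < f k" for k
      using a INF_lower[of k UNIV f] by simp
    then show "eventually (\<lambda>x. a < f x) at_top" by simp
  next
    fix a assume "(INF k. f k) < a"
    then obtain k where k: "f k < a" unfolding INF_less_iff by blast
    have "f x < a" if "x \<ge> k" for x
      using mono[OF that] k by (rule le_less_trans)
    then show "eventually (\<lambda>x. f x < a) at_top"
      unfolding eventually_at_top_linorder by blast
  qed
  then show ?thesis by (rule tendsto_Lim[rotated]) simp
qed

definition gg :: "'a::real_normed_vector set \<Rightarrow> 'a set \<Rightarrow> real \<Rightarrow> ereal" where
  "gg X Y k = Sup (insert 0 ((\<lambda>x. INF y\<in>Y. ereal (norm (x - y))) ` {x\<in>X. norm x \<ge> k}))"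

lemma AH_dir_eq: "AH_dir X Y = (INF k. gg X Y k)"
  unfolding AH_dir_def gg_def[symmetric]
proof (rule Lim_antitone_ereal)
  fix k l :: real assume "k \<le> l"
  then show "gg X Y l \<le> gg X Y k"
    unfolding gg_def by (intro Sup_subset_mono image_mono insert_mono) auto
qed

lemma AH_dir_refl: "AH_dir X X = 0"
proof -
  have "gg X X k = 0" for k
  proof -
    have "(INF y\<in>X. ereal (norm (x - y))) = 0" if "x \<in> X" for x
      by (rule antisym) (auto intro!: INF_lower2[OF that] INF_greatest)
    then show ?thesis unfolding gg_def by (auto intro!: antisym Sup_least)
  qed
  then show ?thesis by (simp add: AH_dir_eq)
qed

lemma gg_nonneg: "0 \<le> gg X Y k"
  unfolding gg_def by (auto intro: Sup_upper)

lemma AH_dir_nonneg: "0 \<le> AH_dir X Y"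
  unfolding AH_dir_eq by (auto intro: INF_greatest gg_nonneg)

lemma AH_dir_tri: "AH_dir X Z \<le> AH_dir X Y + AH_dir Y Z"
proof (cases "AH_dir X Y = \<infinity> \<or> AH_dir Y Z = \<infinity>")
  case True
  then show ?thesis using AH_dir_nonneg[of X Y] AH_dir_nonneg[of Y Z] by auto
next
  case False
  obtain a where a: "AH_dir X Y = ereal a"
    using False AH_dir_nonneg[of X Y] by (cases "AH_dir X Y") auto
  obtain b where b: "AH_dir Y Z = ereal b"
    using False AH_dir_nonneg[of Y Z] by (cases "AH_dir Y Z") auto
  note ab = a b
  have a0: "a \<ge> 0" using a AH_dir_nonneg[of X Y] by simp
  have b0: "b \<ge> 0" using b AH_dir_nonneg[of Y Z] by simp
  show ?thesis
  proof (rule ereal_le_epsilon2)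
    fix e :: real assume e: "0 < e"
    define d where "d = e / 2"
    have d: "d > 0" using e by (simp add: d_def)
    have "(INF k. gg X Y k) = ereal a" using a AH_dir_eq[of X Y] by simp
    then have "(INF k. gg X Y k) < ereal (a + d)" using d by simp
    then obtain k1 where k1: "gg X Y k1 < ereal (a + d)" by (auto simp: INF_less_iff)
    have "(INF k. gg Y Z k) = ereal b" using b AH_dir_eq[of Y Z] by simp
    then have "(INF k. gg Y Z k) < ereal (b + d)" using d by simp
    then obtain k2 where k2: "gg Y Z k2 < ereal (b + d)" by (auto simp: INF_less_iff)
    define k where "k = max k1 (k2 + a + d)"
    have "gg X Z k \<le> ereal (a + b + e)"
      unfolding gg_def
    proof (rule Sup_least)
      fix t assume "t \<in> insert 0 ((\<lambda>x. INF y\<in>Z. ereal (norm (x - y))) ` {x\<in>X. norm x \<ge> k})"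
      then consider "t = 0" | x where "x \<in> X" "k \<le> norm x" "t = (INF y\<in>Z. ereal (norm (x - y)))"
        by blast
      then show "t \<le> ereal (a + b + e)"
      proof cases
        case 1 then show ?thesis using a0 b0 e by simp
      next
        case 2
        then have x: "x \<in> X" "k \<le> norm x" by auto
      have "(INF y\<in>Y. ereal (norm (x - y))) \<le> gg X Y k1"
        unfolding gg_def using x by (intro Sup_upper) (auto simp: k_def)
      then have "(INF y\<in>Y. ereal (norm (x - y))) < ereal (a + d)" using k1 by (rule le_less_trans)
      then obtain y where y: "y \<in> Y" "norm (x - y) < a + d"
        unfolding INF_less_iff by auto
      have "norm y \<ge> norm x - norm (x - y)" using norm_triangle_ineq2[of x y] norm_minus_commute[of x y] by linarith
      then have "norm y \<ge> k2" using x y by (auto simp: k_def)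
      then have "(INF z\<in>Z. ereal (norm (y - z))) \<le> gg Y Z k2"
        unfolding gg_def using y by (intro Sup_upper) auto
      then have "(INF z\<in>Z. ereal (norm (y - z))) < ereal (b + d)" using k2 by (rule le_less_trans)
      then obtain z where z: "z \<in> Z" "norm (y - z) < b + d"
        unfolding INF_less_iff by auto
      have "norm (x - z) \<le> norm (x - y) + norm (y - z)" by (rule norm_diff_triangle_le) auto
      then have "norm (x - z) \<le> a + b + e" using y z by (simp add: d_def)
      then show ?thesis unfolding 2(3)
        by (intro INF_lower2[OF z(1)]) auto
      qed
    qed
    then have "AH_dir X Z \<le> ereal (a + b + e)"
      unfolding AH_dir_eq by (rule INF_lower2[OF UNIV_I])
    then show "AH_dir X Z \<le> AH_dir X Y + AH_dir Y Z + ereal e" using ab by simp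
  qed
qed

theorem mainTheorem4:
  fixes X Y Z :: "'a::real_normed_vector set"
  shows "AH X X = 0 \<and> AH X Y = AH Y X \<and> AH X Z \<le> AH X Y + AH Y Z"
proof (intro conjI)
  show "AH X X = 0" by (simp add: AH_def AH_dir_refl)
  show "AH X Y = AH Y X" by (simp add: AH_def max.commute)
  have "AH_dir X Z \<le> AH X Y + AH Y Z"
    by (rule order_trans[OF AH_dir_tri[of X Z Y]]) (unfold AH_def, rule add_mono, rule max.cobounded1, rule max.cobounded1)
  moreover have "AH_dir Z X \<le> AH X Y + AH Y Z"
    by (rule order_trans[OF AH_dir_tri[of Z X Y]]) (unfold AH_def, subst add.commute, rule add_mono, rule max.cobounded2, rule max.cobounded2)
  ultimately show "AH X Z \<le> AH X Y + AH Y Z" by (simp add: AH_def)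
qed

end
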